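(* Let $\omega$ be an admissible weight on $\mathbb{N}$, and let $\mathcal{A}$ be a commutative unital complex Banach algebra. Then $\mathcal{D}(\mathbb{N},\omega,\mathcal{A})$ is inverse-closed in $\mathcal{D}(\mathbb{N},\mathcal{A})$: if $f\in\mathcal{D}(\mathbb{N},\omega,\mathcal{A})$ is invertible in $\mathcal{D}(\mathbb{N},\mathcal{A})$, then its inverse lies in $\mathcal{D}(\mathbb{N},\omega,\mathcal{A})$.
   Context: $\mathcal{H}=\{s\in\mathbb C:\operatorname{Re}s\geq 0\}$. A weight on $\mathbb N$ (as a multiplicative semigroup) is a map $\omega:\mathbb N\to[1,\infty)$ with $\omega(1)=1$ and $\omega(mn)\le\omega(m)\omega(n)$; it is admissible if $\lim_{k\to\infty}\omega(n^k)^{1/k}=1$ for all $n$. $\mathcal D(\mathbb N,\omega,\mathcal A)$ is the Banach algebra (pointwise multiplication) of functions $f:\mathcal H\to\mathcal A$, $f(s)=\sum_{n}f_n n^{-s}$ with $\sum_n\|f_n\|\omega(n)<\infty$; $\mathcal D(\mathbb N,\mathcal A)$ is the case $\omega\equiv 1$. Both share the unit $f\equiv 1_\mathcal A$. *)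

theory Defs
  imports "HOL-Analysis.Analysis"
begin

text \<open>Commutative unital complex Banach algebras: a real Banach algebra with unit
  and commutative multiplication, equipped with a compatible complex scalar
  multiplication (there is no such class in the library).\<close>

class comm_complex_banach_algebra_1 = real_normed_algebra_1 + banach + comm_ring_1 +
  fixes cscale :: "complex \<Rightarrow> 'a \<Rightarrow> 'a"
  assumes cscale_add_right: "cscale c (x + y) = cscale c x + cscale c y"
    and cscale_add_left: "cscale (b + c) x = cscale b x + cscale c x"
    and cscale_cscale: "cscale b (cscale c x) = cscale (b * c) x"
    and cscale_one: "cscale 1 x = x"
    and scaleR_cscale: "scaleR r x = cscale (complex_of_real r) x"
    and norm_cscale: "norm (cscale c x) = cmod c * norm x"
    and cscale_mult_left: "cscale c x * y = cscale c (x * y)"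

definition half_plane :: "complex set" where
  "half_plane = {s. 0 \<le> Re s}"

text \<open>Weights on the multiplicative semigroup \<open>\<nat> = {1,2,...}\<close>
  (values at 0 are irrelevant).\<close>
definition is_weight :: "(nat \<Rightarrow> real) \<Rightarrow> bool" where
  "is_weight \<omega> \<longleftrightarrow> \<omega> 1 = 1 \<and> (\<forall>n\<ge>1. 1 \<le> \<omega> n)
     \<and> (\<forall>m\<ge>1. \<forall>n\<ge>1. \<omega> (m * n) \<le> \<omega> m * \<omega> n)"

definition admissible_weight :: "(nat \<Rightarrow> real) \<Rightarrow> bool" where
  "admissible_weight \<omega> \<longleftrightarrow> is_weight \<omega> \<and>
     (\<forall>n\<ge>1. (\<lambda>k. \<omega> (n ^ k) powr (1 / real k)) \<longlonglongrightarrow> 1)"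

text \<open>Functions are compared on \<open>\<H>\<close>
  only (values outside \<open>\<H>\<close> are ignored); the coefficient at index 0 is unused
  and set to 0.\<close>
definition dirichlet_alg ::
  "(nat \<Rightarrow> real) \<Rightarrow> (complex \<Rightarrow> 'a::comm_complex_banach_algebra_1) set" where
  "dirichlet_alg \<omega> = {f. \<exists>c :: nat \<Rightarrow> 'a. c 0 = 0 \<and>
      summable (\<lambda>n. norm (c n) * \<omega> n) \<and>
      (\<forall>s\<in>half_plane. f s = (\<Sum>n. cscale (of_nat n powr (- s)) (c n)))}"

definition dirichlet_alg1 :: "(complex \<Rightarrow> 'a::comm_complex_banach_algebra_1) set" where
  "dirichlet_alg1 = dirichlet_alg (\<lambda>_. 1)"

end

theory Submission
  imports Defs
begin

typedef (overloaded) 'a ds = "{a :: nat \<Rightarrow> 'a::zero. a 0 = 0}" morphisms coef Abs_ds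
  by (rule exI[of _ "\<lambda>_. 0"]) simp

setup_lifting type_definition_ds

lemma coef_0[simp]: "coef a 0 = 0"
  using coef[of a] by simp

lemma coef_Abs[simp]: "c 0 = 0 \<Longrightarrow> coef (Abs_ds c) = c"
  by (simp add: Abs_ds_inverse)

lemma ds_eqI: "(\<And>n. n > 0 \<Longrightarrow> coef a n = coef b n) \<Longrightarrow> a = b"
  by (metis coef_0 coef_inject ext gr0I)

definition P :: "nat \<Rightarrow> (nat \<times> nat) set" where "P n = {(d,e). d*e = n}"

lemma P_finite: "n > 0 \<Longrightarrow> finite (P n)"
proof -
  assume "n > 0"
  have "P n \<subseteq> {..n} \<times> {..n}"
  proof
    fix x assume "x \<in> P n"
    then obtain d e where x: "x = (d,e)" "d*e = n" by (auto simp: P_def)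
    have "d \<le> n" using x \<open>n>0\<close> by (metis dvd_imp_le dvd_triv_left)
    moreover have "e \<le> n" using x \<open>n>0\<close> by (metis dvd_imp_le dvd_triv_right)
    ultimately show "x \<in> {..n} \<times> {..n}" using x by auto
  qed
  thus ?thesis by (rule finite_subset) auto
qed

lemma P_infinite: "infinite (P 0)"
proof
  assume "finite (P 0)"
  moreover have "range (Pair (0::nat) :: nat \<Rightarrow> nat \<times> nat) \<subseteq> P 0" by (auto simp: P_def)
  ultimately have "finite (range (Pair (0::nat) :: nat \<Rightarrow> nat \<times> nat))" by (metis finite_subset)
  hence "finite (UNIV :: nat set)" by (rule finite_imageD) (simp add: inj_on_def)
  thus False by simp
qed

lemma P_pos: "n > 0 \<Longrightarrow> (d,e) \<in> P n \<Longrightarrow> d > 0 \<and> e > 0"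
  by (auto simp: P_def)

definition conv :: "(nat \<Rightarrow> 'a::comm_ring_1) \<Rightarrow> (nat \<Rightarrow> 'a) \<Rightarrow> nat \<Rightarrow> 'a" where
  "conv a b n = (\<Sum>(d,e)\<in>P n. a d * b e)"

lemma conv_0[simp]: "conv a b 0 = 0"
  by (simp add: conv_def P_infinite)

lemma conv_comm: "conv a b = conv b a"
proof
  fix n
  show "conv a b n = conv b a n" unfolding conv_def
    by (rule sum.reindex_bij_witness[of _ "\<lambda>(d,e). (e,d)" "\<lambda>(d,e). (e,d)"])
       (auto simp: P_def mult.commute)
qed

lemma conv_assoc: "conv (conv a b) c = conv a (conv b c)"
proof
  fix n :: nat
  show "conv (conv a b) c n = conv a (conv b c) n"
  proof (cases "n = 0")
    case True thus ?thesis by simp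
  next
    case False
    hence n: "n > 0" by simp
    define T where "T = {(d,e,f). d*e*f = n}"
    have fin1: "\<forall>y\<in>P n. finite (P (fst y))"
      by (intro ballI P_finite) (use n in \<open>auto simp: P_def\<close>)
    have fin2: "\<forall>y\<in>P n. finite (P (snd y))"
      by (intro ballI P_finite) (use n in \<open>auto simp: P_def\<close>)
    have "conv (conv a b) c n = (\<Sum>y\<in>P n. \<Sum>z\<in>P (fst y). a (fst z) * b (snd z) * c (snd y))"
      unfolding conv_def by (simp add: case_prod_beta sum_distrib_right)
    also have "\<dots> = (\<Sum>(y,z)\<in>Sigma (P n) (\<lambda>y. P (fst y)). a (fst z) * b (snd z) * c (snd y))"
      by (rule sum.Sigma) (use fin1 P_finite[OF n] in auto)
    also have "\<dots> = (\<Sum>(d,e,f)\<in>T. a d * b e * c f)"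
      by (rule sum.reindex_bij_witness[of _ "\<lambda>(d,e,f). ((d*e,f),(d,e))" "\<lambda>((x,f),(d,e)). (d,e,f)"])
         (auto simp: P_def T_def)
    also have "\<dots> = (\<Sum>(y,z)\<in>Sigma (P n) (\<lambda>y. P (snd y)). a (fst y) * b (fst z) * c (snd z))"
      by (rule sum.reindex_bij_witness[of _ "\<lambda>((d,y),(e,f)). (d,e,f)" "\<lambda>(d,e,f). ((d,e*f),(e,f))"])
         (auto simp: P_def T_def mult.assoc)
    also have "\<dots> = (\<Sum>y\<in>P n. \<Sum>z\<in>P (snd y). a (fst y) * b (fst z) * c (snd z))"
      by (rule sum.Sigma[symmetric]) (use fin2 P_finite[OF n] in auto)
    also have "\<dots> = conv a (conv b c) n"
      unfolding conv_def by (simp add: case_prod_beta sum_distrib_left mult.assoc)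
    finally show ?thesis .
  qed
qed

definition one_seq :: "nat \<Rightarrow> 'a::comm_ring_1" where "one_seq n = (if n = 1 then 1 else 0)"

lemma conv_one: "n > 0 \<Longrightarrow> conv one_seq a n = a n"
proof -
  assume n: "n > 0"
  have "conv one_seq a n = (\<Sum>x\<in>P n. if x = (1,n) then a n else 0)"
    unfolding conv_def by (rule sum.cong) (auto simp: one_seq_def P_def split: if_splits)
  also have "\<dots> = a n" using P_finite[OF n] by (simp add: P_def)
  finally show ?thesis .
qed

lemma conv_add: "conv (\<lambda>n. a n + b n) c n = conv a c n + conv b c n"
  by (simp add: conv_def distrib_right sum.distrib case_prod_beta)

instantiation ds :: (comm_ring_1) comm_ring_1
begin
lift_definition zero_ds :: "'a ds" is "\<lambda>_. 0" by simp
lift_definition one_ds :: "'a ds" is "one_seq" by (simp add: one_seq_def)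
lift_definition plus_ds :: "'a ds \<Rightarrow> 'a ds \<Rightarrow> 'a ds" is "\<lambda>a b n. a n + b n" by simp
lift_definition minus_ds :: "'a ds \<Rightarrow> 'a ds \<Rightarrow> 'a ds" is "\<lambda>a b n. a n - b n" by simp
lift_definition uminus_ds :: "'a ds \<Rightarrow> 'a ds" is "\<lambda>a n. - a n" by simp
lift_definition times_ds :: "'a ds \<Rightarrow> 'a ds \<Rightarrow> 'a ds" is conv by simp
instance
proof
  fix a b c :: "'a ds"
  show "a * b * c = a * (b * c)" by transfer (rule conv_assoc)
  show "a * b = b * a" by transfer (rule conv_comm)
  show "1 * a = a" by (rule ds_eqI) (transfer, simp add: conv_one)
  show "(a + b) * c = a * c + b * c" by transfer (rule ext, rule conv_add)
  show "a + b + c = a + (b + c)" by transfer (simp add: add.assoc)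
  show "a + b = b + a" by transfer (simp add: add.commute)
  show "0 + a = a" by transfer simp
  show "- a + a = 0" by transfer simp
  show "a - b = a + - b" by transfer simp
  show "(0::'a ds) \<noteq> 1"
  proof
    assume "(0::'a ds) = 1"
    hence "coef (0::'a ds) 1 = coef 1 1" by simp
    thus False by transfer (simp add: one_seq_def)
  qed
qed
end

lemma coef_zero[simp]: "coef 0 n = 0" by transfer simp
lemma coef_one: "coef 1 n = (if n = 1 then 1 else 0)" by transfer (simp add: one_seq_def)
lemma coef_add[simp]: "coef (a + b) n = coef a n + coef b n" by transfer simp
lemma coef_diff[simp]: "coef (a - b) n = coef a n - coef b n" by transfer simp
lemma coef_uminus[simp]: "coef (- a) n = - coef a n" by transfer simp
lemma coef_mult: "coef (a * b) n = (\<Sum>(d,e)\<in>P n. coef a d * coef b e)"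
  by transfer (simp add: conv_def)

lemma summable_norm_has_sum:
  fixes x :: "nat \<Rightarrow> 'a::banach"
  assumes "summable (\<lambda>n. norm (x n))"
  shows "(x has_sum suminf x) UNIV"
  using assms norm_summable_imp_has_sum summable_norm_cancel summable_sums by blast

lemma has_sum_prod:
  fixes x y :: "nat \<Rightarrow> 'a::{real_normed_algebra,banach}"
  assumes sx: "summable (\<lambda>n. norm (x n))" and sy: "summable (\<lambda>n. norm (y n))"
  shows "((\<lambda>(d,e). x d * y e) has_sum (suminf x * suminf y)) UNIV"
proof -
  define X where "X = (\<Sum>n. norm (x n))"
  define Y where "Y = (\<Sum>n. norm (y n))"
  have "(\<lambda>(d,e). norm (x d) * norm (y e)) summable_on UNIV"
  proof (rule nonneg_bdd_above_summable_on)
    show "bdd_above (sum (\<lambda>(d,e). norm (x d) * norm (y e)) ` {F. F \<subseteq> UNIV \<and> finite F})"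
    proof (rule bdd_aboveI2)
      fix F :: "(nat \<times> nat) set" assume "F \<in> {F. F \<subseteq> UNIV \<and> finite F}"
      hence F: "finite F" by simp
      have "sum (\<lambda>(d,e). norm (x d) * norm (y e)) F
          \<le> sum (\<lambda>(d,e). norm (x d) * norm (y e)) (fst ` F \<times> snd ` F)"
        by (rule sum_mono2) (use F in \<open>auto simp: rev_image_eqI\<close>)
      also have "\<dots> = (\<Sum>d\<in>fst ` F. norm (x d)) * (\<Sum>e\<in>snd ` F. norm (y e))"
        by (simp add: sum_product sum.cartesian_product)
      also have "\<dots> \<le> X * Y"
        unfolding X_def Y_def
        by (intro mult_mono sum_le_suminf sx sy sum_nonneg suminf_nonneg) (use F in auto)
      finally show "sum (\<lambda>(d,e). norm (x d) * norm (y e)) F \<le> X * Y" .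
    qed
  qed auto
  hence "(\<lambda>(d,e). x d * y e) abs_summable_on UNIV"
    by (rule summable_on_comparison_test) (auto simp: norm_mult_ineq)
  hence sm: "(\<lambda>(d,e). x d * y e) summable_on (UNIV \<times> UNIV)"
    by (simp add: abs_summable_summable)
  have hy: "(y has_sum suminf y) UNIV" by (rule summable_norm_has_sum[OF sy])
  have hx: "(x has_sum suminf x) UNIV" by (rule summable_norm_has_sum[OF sx])
  have "((\<lambda>(d,e). x d * y e) has_sum (suminf x * suminf y)) (UNIV \<times> UNIV)"
  proof (rule has_sum_SigmaI[OF _ _ sm])
    show "((\<lambda>e. case (d, e) of (d, e) \<Rightarrow> x d * y e) has_sum x d * suminf y) UNIV" for d
      using has_sum_cmult_right[OF hy, of "x d"] by simp
    show "((\<lambda>d. x d * suminf y) has_sum suminf x * suminf y) UNIV"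
      by (rule has_sum_cmult_left[OF hx])
  qed
  thus ?thesis by simp
qed

lemma fiber_has_sum:
  fixes f :: "nat \<times> nat \<Rightarrow> 'b::banach"
  assumes hs: "(f has_sum S) UNIV" and z1: "\<And>e. f (0,e) = 0" and z2: "\<And>d. f (d,0) = 0"
  shows "((\<lambda>n. sum f (P n)) has_sum S) UNIV"
proof -
  have bij: "bij_betw snd (Sigma UNIV P) UNIV"
    by (rule bij_betw_byWitness[of _ "\<lambda>(d,e). (d*e,(d,e))"]) (auto simp: P_def)
  have "((\<lambda>z. f (snd z)) has_sum S) (Sigma UNIV P)"
    using has_sum_reindex_bij_betw[OF bij, of f] hs by simp
  thus ?thesis
  proof (rule has_sum_SigmaD)
    fix n :: nat assume "n \<in> UNIV"
    show "((\<lambda>y. f (snd (n, y))) has_sum sum f (P n)) (P n)"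
    proof (cases "n = 0")
      case True
      have "((\<lambda>y. f y) has_sum 0) (P 0)"
        by (rule has_sum_0) (auto simp: P_def z1 z2)
      thus ?thesis using True P_infinite by simp
    next
      case False thus ?thesis using P_finite by simp
    qed
  qed
qed

type_synonym 'a dsA = "'a::comm_complex_banach_algebra_1 ds"

definition wL :: "(nat \<Rightarrow> real) \<Rightarrow> 'a::comm_complex_banach_algebra_1 ds \<Rightarrow> bool" where
  "wL w a \<longleftrightarrow> summable (\<lambda>n. norm (coef a n) * w n)"
definition wsum :: "(nat \<Rightarrow> real) \<Rightarrow> 'a::comm_complex_banach_algebra_1 ds \<Rightarrow> real" where
  "wsum w a = (\<Sum>n. norm (coef a n) * w n)"

lemma is_weight_one: "is_weight (\<lambda>_. 1)"
  by (simp add: is_weight_def)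

lemma wt_ge1: "is_weight w \<Longrightarrow> n > 0 \<Longrightarrow> 1 \<le> w n"
  by (simp add: is_weight_def)

lemma wt_mult: "is_weight w \<Longrightarrow> m > 0 \<Longrightarrow> n > 0 \<Longrightarrow> w (m*n) \<le> w m * w n"
  by (simp add: is_weight_def)

lemma term_nonneg: "is_weight w \<Longrightarrow> 0 \<le> norm (coef a n) * w n"
  by (cases "n = 0") (auto dest: wt_ge1[of w n])

lemma summable_cmp:
  fixes f g :: "nat \<Rightarrow> real"
  assumes "\<And>n. 0 \<le> f n" "\<And>n. f n \<le> g n" "summable g"
  shows "summable f"
  by (rule summable_comparison_test'[OF assms(3), of 0]) (use assms in auto)

lemma wsum_nonneg: "is_weight w \<Longrightarrow> wL w a \<Longrightarrow> 0 \<le> wsum w a"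
  unfolding wsum_def wL_def by (intro suminf_nonneg) (auto simp: term_nonneg)

lemma coef_le_wsum: "is_weight w \<Longrightarrow> wL w a \<Longrightarrow> norm (coef a n) * w n \<le> wsum w a"
  unfolding wsum_def wL_def
  using sum_le_suminf[of "\<lambda>n. norm (coef a n) * w n" "{n}"] by (auto simp: term_nonneg)

lemma wL_add: "wL w a \<Longrightarrow> wL w b \<Longrightarrow> is_weight w \<Longrightarrow> wL w (a + b) \<and> wsum w (a + b) \<le> wsum w a + wsum w b"
proof -
  assume a: "wL w a" and b: "wL w b" and wt: "is_weight w"
  have le: "norm (coef (a+b) n) * w n \<le> norm (coef a n) * w n + norm (coef b n) * w n" for n
  proof (cases "n = 0")
    case False
    hence "w n \<ge> 0" using wt_ge1[OF wt, of n] by simp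
    thus ?thesis by (simp add: distrib_right[symmetric] mult_right_mono norm_triangle_ineq)
  qed simp
  have s: "summable (\<lambda>n. norm (coef a n) * w n + norm (coef b n) * w n)"
    using a b unfolding wL_def by (rule summable_add)
  have "wL w (a + b)" unfolding wL_def
    by (rule summable_cmp[OF _ _ s]) (use le term_nonneg[OF wt, of "a+b"] in auto)
  moreover have "wsum w (a + b) \<le> (\<Sum>n. norm (coef a n) * w n + norm (coef b n) * w n)"
    unfolding wsum_def by (rule suminf_le[OF le]) (use calculation s in \<open>simp_all add: wL_def\<close>)
  moreover have "(\<Sum>n. norm (coef a n) * w n + norm (coef b n) * w n) = wsum w a + wsum w b"
    unfolding wsum_def by (rule suminf_add[symmetric]) (use a b in \<open>simp_all add: wL_def\<close>)
  ultimately show ?thesis by linarith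
qed

lemma wL_uminus: "wL w (- a) = wL w a" and wsum_uminus: "wsum w (- a) = wsum w a"
  by (simp_all add: wL_def wsum_def)

lemma wL_diff: "wL w a \<Longrightarrow> wL w b \<Longrightarrow> is_weight w \<Longrightarrow> wL w (a - b) \<and> wsum w (a - b) \<le> wsum w a + wsum w b"
  using wL_add[of w a "- b"] by (simp add: wL_uminus wsum_uminus)

lemma wL_zero: "wL w 0" and wsum_zero: "wsum w 0 = 0"
  by (simp_all add: wL_def wsum_def)

lemma wL_sum: "finite A \<Longrightarrow> is_weight w \<Longrightarrow> (\<And>i. i \<in> A \<Longrightarrow> wL w (f i)) \<Longrightarrow>
   wL w (sum f A) \<and> wsum w (sum f A) \<le> (\<Sum>i\<in>A. wsum w (f i))"
proof (induction A rule: finite_induct)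
  case empty thus ?case by (simp add: wL_zero wsum_zero)
next
  case (insert x F)
  hence ih: "wL w (sum f F)" "wsum w (sum f F) \<le> (\<Sum>i\<in>F. wsum w (f i))" by auto
  have fx: "wL w (f x)" using insert by auto
  from wL_add[OF fx ih(1) insert.prems(1)] ih(2) insert.hyps show ?case by auto
qed

lemma one_sums: "(\<lambda>n. norm (coef (1::'a::comm_complex_banach_algebra_1 ds) n) * w n) sums w 1"
proof -
  have "(\<lambda>n. norm (coef (1::'a ds) n) * w n) = (\<lambda>n. if n = 1 then w 1 else 0)"
    by (auto simp: coef_one)
  moreover have "(\<lambda>n::nat. if n = 1 then w 1 else 0) sums w 1"
    using sums_single[of 1 "\<lambda>_. w 1"] by simp
  ultimately show ?thesis by simp
qed

lemma wL_one: "wL w 1"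
  unfolding wL_def by (rule sums_summable[OF one_sums])

lemma wsum_one: "is_weight w \<Longrightarrow> wsum w 1 = 1"
  unfolding wsum_def using sums_unique[OF one_sums, of w] by (simp add: is_weight_def)

lemma wL_mult: "wL w a \<Longrightarrow> wL w b \<Longrightarrow> is_weight w \<Longrightarrow> wL w (a * b) \<and> wsum w (a * b) \<le> wsum w a * wsum w b"
proof -
  assume a: "wL w a" and b: "wL w b" and wt: "is_weight w"
  define x where "x n = norm (coef a n) * w n" for n
  define y where "y n = norm (coef b n) * w n" for n
  have xn: "x n \<ge> 0" "y n \<ge> 0" for n using term_nonneg[OF wt] by (auto simp: x_def y_def)
  have sx: "summable (\<lambda>n. norm (x n))" "summable (\<lambda>n. norm (y n))"
    using a b xn by (simp_all add: wL_def x_def y_def abs_of_nonneg)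
  have "((\<lambda>(d,e). x d * y e) has_sum (suminf x * suminf y)) UNIV"
    by (rule has_sum_prod[OF sx])
  hence "((\<lambda>n. sum (\<lambda>(d,e). x d * y e) (P n)) has_sum (suminf x * suminf y)) UNIV"
    by (rule fiber_has_sum) (simp_all add: x_def y_def)
  moreover have "suminf x = wsum w a" "suminf y = wsum w b" by (simp_all add: x_def[abs_def] y_def[abs_def] wsum_def)
  ultimately have sums: "(\<lambda>n. sum (\<lambda>(d,e). x d * y e) (P n)) sums (wsum w a * wsum w b)"
    by (metis has_sum_imp_sums)
  have le: "norm (coef (a*b) n) * w n \<le> sum (\<lambda>(d,e). x d * y e) (P n)" for n
  proof (cases "n = 0")
    case True thus ?thesis using P_infinite by simp
  next
    case False
    hence n: "n > 0" by simp
    have "norm (coef (a*b) n) \<le> (\<Sum>(d,e)\<in>P n. norm (coef a d) * norm (coef b e))"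
      unfolding coef_mult by (rule order.trans[OF norm_sum sum_mono]) (simp add: case_prod_beta norm_mult_ineq)
    hence "norm (coef (a*b) n) * w n \<le> (\<Sum>(d,e)\<in>P n. norm (coef a d) * norm (coef b e)) * w n"
      by (rule mult_right_mono) (use wt_ge1[OF wt n] in simp)
    also have "\<dots> = (\<Sum>(d,e)\<in>P n. norm (coef a d) * norm (coef b e) * w (d*e))"
      unfolding sum_distrib_right by (rule sum.cong) (auto simp: P_def)
    also have "\<dots> \<le> sum (\<lambda>(d,e). x d * y e) (P n)"
    proof (rule sum_mono)
      fix z assume z: "z \<in> P n"
      obtain d e where de: "z = (d,e)" by (cases z)
      have pos: "d > 0" "e > 0" using P_pos[OF n] z de by auto
      have "norm (coef a d) * norm (coef b e) * w (d*e) \<le> norm (coef a d) * norm (coef b e) * (w d * w e)"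
        by (intro mult_left_mono wt_mult[OF wt pos]) auto
      thus "(case z of (d,e) \<Rightarrow> norm (coef a d) * norm (coef b e) * w (d*e)) \<le> (case z of (d,e) \<Rightarrow> x d * y e)"
        by (simp add: de x_def y_def mult_ac)
    qed
    finally show ?thesis .
  qed
  have "wL w (a * b)" unfolding wL_def
    by (rule summable_cmp[OF _ _ sums_summable[OF sums]]) (use le term_nonneg[OF wt] in auto)
  moreover have "wsum w (a * b) \<le> (\<Sum>n. sum (\<lambda>(d,e). x d * y e) (P n))"
    unfolding wsum_def by (rule suminf_le[OF le]) (use calculation sums_summable[OF sums] in \<open>simp_all add: wL_def\<close>)
  moreover have "(\<Sum>n. sum (\<lambda>(d,e). x d * y e) (P n)) = wsum w a * wsum w b"
    using sums_unique[OF sums] by simp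
  ultimately show ?thesis by linarith
qed

lemma wL_pow: "wL w a \<Longrightarrow> is_weight w \<Longrightarrow> wL w (a ^ j) \<and> wsum w (a ^ j) \<le> wsum w a ^ j"
proof (induction j)
  case 0 thus ?case by (simp add: wL_one wsum_one)
next
  case (Suc j)
  hence ih: "wL w (a^j)" "wsum w (a^j) \<le> wsum w a ^ j" by auto
  have m: "wL w (a * a^j) \<and> wsum w (a * a^j) \<le> wsum w a * wsum w (a^j)"
    by (rule wL_mult[OF Suc.prems(1) ih(1) Suc.prems(2)])
  have "wsum w a * wsum w (a^j) \<le> wsum w a * wsum w a ^ j"
    by (rule mult_left_mono[OF ih(2) wsum_nonneg[OF Suc.prems(2,1)]])
  with m show ?case unfolding power_Suc by (meson order.trans)
qed

lemma wL_of_nat_mult: "wL w a \<Longrightarrow> is_weight w \<Longrightarrow> wL w (of_nat k * a) \<and> wsum w (of_nat k * a) \<le> of_nat k * wsum w a"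
proof -
  assume a: "wL w a" and wt: "is_weight w"
  have e: "of_nat k * a = (\<Sum>i<k. a)" by (simp only: sum_constant card_lessThan)
  have "wL w (\<Sum>i<k. a) \<and> wsum w (\<Sum>i<k. a) \<le> (\<Sum>i<k. wsum w a)"
    by (rule wL_sum) (use a wt in auto)
  moreover have "(\<Sum>i<k. wsum w a) = of_nat k * wsum w a" by simp
  ultimately show ?thesis unfolding e by simp
qed

lemma binom_bound:
  fixes x y :: "'a::comm_complex_banach_algebra_1 ds"
  assumes wt: "is_weight w" and x: "wL w x" and y: "wL w y"
    and Cx: "Cx \<ge> 0" and Cy: "Cy \<ge> 0" and rx: "rx \<ge> 0" and ry: "ry \<ge> 0"
    and hx: "\<And>j. wsum w (x^j) \<le> Cx * rx^j" and hy: "\<And>j. wsum w (y^j) \<le> Cy * ry^j"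
  shows "wsum w ((x+y)^n) \<le> Cx * Cy * (rx+ry)^n"
proof -
  have xk: "wL w (x^k)" for k using wL_pow[OF x wt] by blast
  have yk: "wL w (y^k)" for k using wL_pow[OF y wt] by blast
  have t: "wL w (of_nat (n choose k) * x^k * y^(n-k)) \<and>
     wsum w (of_nat (n choose k) * x^k * y^(n-k)) \<le> of_nat (n choose k) * (Cx * rx^k) * (Cy * ry^(n-k))" for k
  proof -
    have a: "wL w (of_nat (n choose k) * x^k) \<and> wsum w (of_nat (n choose k) * x^k) \<le> of_nat (n choose k) * wsum w (x^k)"
      by (rule wL_of_nat_mult[OF xk wt])
    have b: "wL w (of_nat (n choose k) * x^k * y^(n-k)) \<and> wsum w (of_nat (n choose k) * x^k * y^(n-k)) \<le>
         wsum w (of_nat (n choose k) * x^k) * wsum w (y^(n-k))"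
      by (rule wL_mult) (use a yk wt in auto)
    have "wsum w (of_nat (n choose k) * x^k) * wsum w (y^(n-k)) \<le> (of_nat (n choose k) * (Cx * rx^k)) * (Cy * ry^(n-k))"
    proof (rule mult_mono)
      show "wsum w (of_nat (n choose k) * x ^ k) \<le> of_nat (n choose k) * (Cx * rx ^ k)"
        using a hx[of k] by (meson mult_left_mono of_nat_0_le_iff order.trans)
      show "wsum w (y ^ (n - k)) \<le> Cy * ry ^ (n - k)" by (rule hy)
      show "0 \<le> of_nat (n choose k) * (Cx * rx ^ k)" using Cx rx by simp
      show "0 \<le> wsum w (y ^ (n - k))" by (rule wsum_nonneg[OF wt yk])
    qed
    with b show ?thesis by auto
  qed
  have "(x+y)^n = (\<Sum>k\<le>n. of_nat (n choose k) * x^k * y^(n-k))" by (rule binomial_ring)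
  hence "wsum w ((x+y)^n) \<le> (\<Sum>k\<le>n. wsum w (of_nat (n choose k) * x^k * y^(n-k)))"
    using wL_sum[of "{..n}" w "\<lambda>k. of_nat (n choose k) * x^k * y^(n-k)"] t wt by simp
  also have "\<dots> \<le> (\<Sum>k\<le>n. of_nat (n choose k) * (Cx * rx^k) * (Cy * ry^(n-k)))"
    by (rule sum_mono) (use t in blast)
  also have "\<dots> = Cx * Cy * (\<Sum>k\<le>n. of_nat (n choose k) * rx^k * ry^(n-k))"
    by (simp add: sum_distrib_left mult_ac)
  also have "\<dots> = Cx * Cy * (rx+ry)^n" by (simp add: binomial_ring)
  finally show ?thesis .
qed

definition mono_el :: "'a::comm_complex_banach_algebra_1 \<Rightarrow> nat \<Rightarrow> 'a ds" where
  "mono_el r m = Abs_ds (\<lambda>n. if n = m \<and> m \<noteq> 0 then r else 0)"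

lemma coef_mono_el: "coef (mono_el r m) n = (if n = m \<and> m \<noteq> 0 then r else 0)"
  unfolding mono_el_def by (subst coef_Abs) auto

lemma mono_el_0: "mono_el r 0 = 0"
  by (rule ds_eqI) (simp add: coef_mono_el)

lemma mono_el_mult:
  assumes "m > 0" "q > 0"
  shows "mono_el r m * mono_el s q = mono_el (r * s) (m*q)"
proof (rule ds_eqI)
  fix n :: nat assume n: "n > 0"
  have "coef (mono_el r m * mono_el s q) n = (\<Sum>z\<in>P n. if z = (m,q) then r * s else 0)"
    unfolding coef_mult using assms by (intro sum.cong) (auto simp: coef_mono_el split: if_splits)
  also have "\<dots> = (if (m,q) \<in> P n then r * s else 0)"
    using P_finite[OF n] by simp
  also have "\<dots> = coef (mono_el (r * s) (m*q)) n"
    using assms by (auto simp: coef_mono_el P_def)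
  finally show "coef (mono_el r m * mono_el s q) n = coef (mono_el (r * s) (m*q)) n" .
qed

lemma mono_el_one: "mono_el 1 1 = 1"
  by (rule ds_eqI) (simp add: coef_mono_el coef_one)

lemma mono_el_pow: "m > 0 \<Longrightarrow> mono_el r m ^ k = mono_el (r^k) (m^k)"
proof (induction k)
  case 0 thus ?case by (simp only: power_0 mono_el_one)
next
  case (Suc k)
  thus ?case by (simp add: mono_el_mult)
qed

lemma mono_el_sums: "(\<lambda>n. norm (coef (mono_el r m) n) * w n) sums (if m = 0 then 0 else norm r * w m)"
proof -
  have "(\<lambda>n. norm (coef (mono_el r m) n) * w n) = (\<lambda>n. if n = m then (if m = 0 then 0 else norm r * w m) else 0)"
    by (auto simp: coef_mono_el)
  thus ?thesis using sums_single[of m "\<lambda>_. (if m = 0 then 0 else norm r * w m)"] by simp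
qed

lemma wL_mono_el: "wL w (mono_el r m)"
  unfolding wL_def using mono_el_sums by (rule sums_summable)

lemma wsum_mono_el: "m > 0 \<Longrightarrow> wsum w (mono_el r m) = norm r * w m"
  unfolding wsum_def using sums_unique[OF mono_el_sums[where r=r and m=m and w=w]] by simp

lemma adm_bound:
  assumes adm: "admissible_weight w" and m: "m > 0"
  shows "\<exists>C\<ge>1. \<forall>k. w (m^k) \<le> C * 2^k"
proof -
  have wt: "is_weight w" using adm by (simp add: admissible_weight_def)
  have pos: "w (m^k) \<ge> 1" for k using wt_ge1[OF wt] m by simp
  have "(\<lambda>k. w (m ^ k) powr (1 / real k)) \<longlonglongrightarrow> 1"
    using adm m by (simp add: admissible_weight_def)
  hence "eventually (\<lambda>k. w (m ^ k) powr (1 / real k) < 2) sequentially"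
    by (rule order_tendstoD) simp
  then obtain K where K: "\<And>k. k \<ge> K \<Longrightarrow> w (m ^ k) powr (1 / real k) < 2"
    by (auto simp: eventually_sequentially)
  define C where "C = 1 + (\<Sum>k<K. w (m^k))"
  have C1: "C \<ge> 1" unfolding C_def using pos by (simp add: sum_nonneg order.trans[OF zero_le_one])
  have "w (m^k) \<le> C * 2^k" for k
  proof (cases "k < K \<or> k = 0")
    case True
    have "w (m^k) \<le> C"
    proof (cases "k < K")
      case True
      have "w (m^k) \<le> (\<Sum>k<K. w (m^k))"
        by (rule member_le_sum) (use True pos in \<open>auto intro: order.trans[OF zero_le_one]\<close>)
      thus ?thesis unfolding C_def by simp
    next
      case False
      hence "k = 0" using \<open>k < K \<or> k = 0\<close> by simp
      thus ?thesis using C1 wt by (simp add: is_weight_def)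
    qed
    also have "C \<le> C * 2^k" using C1 by simp
    finally show ?thesis .
  next
    case False
    hence k: "k \<ge> K" "k > 0" by auto
    define b where "b = w (m ^ k) powr (1 / real k)"
    have b0: "b \<ge> 0" unfolding b_def by simp
    have "w (m^k) = b ^ k"
    proof -
      have "b ^ k = b powr real k" using pos[of k] b0 unfolding b_def
        by (subst powr_realpow) auto
      also have "\<dots> = w (m^k)" unfolding b_def using pos[of k] k
        by (simp add: powr_powr)
      finally show ?thesis by simp
    qed
    also have "\<dots> \<le> 2 ^ k" using K[OF k(1)] b0 unfolding b_def[symmetric]
      by (intro power_mono) auto
    also have "\<dots> \<le> C * 2^k" using C1 by simp
    finally show ?thesis .
  qed
  with C1 show ?thesis by blast
qed

lemma mono_pow_bound:
  assumes adm: "admissible_weight w"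
  shows "\<exists>C\<ge>1. \<forall>k. wsum w ((mono_el r m)^k) \<le> C * (2 * norm r)^k"
proof (cases "m = 0")
  case True
  have wt: "is_weight w" using adm by (simp add: admissible_weight_def)
  have "wsum w ((mono_el r m)^k) \<le> 1 * (2 * norm r)^k" for k
    using True by (cases k) (simp_all add: mono_el_0 wsum_one[OF wt] wsum_zero)
  thus ?thesis by (intro exI[of _ 1]) auto
next
  case False
  hence m: "m > 0" by simp
  obtain C where C: "C \<ge> 1" "\<And>k. w (m^k) \<le> C * 2^k" using adm_bound[OF adm m] by blast
  have pos: "w (m^k) \<ge> 0" for k using adm m by (auto simp: admissible_weight_def dest: wt_ge1[of w "m^k"])
  have "wsum w ((mono_el r m)^k) \<le> C * (2 * norm r)^k" for k
  proof -
    have "wsum w ((mono_el r m)^k) = norm (r^k) * w (m^k)"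
      using m by (simp add: mono_el_pow wsum_mono_el)
    also have "\<dots> \<le> norm r ^ k * (C * 2^k)"
      by (intro mult_mono norm_power_ineq C(2)) (use pos in auto)
    also have "\<dots> = C * (2 * norm r)^k" by (simp add: power_mult_distrib)
    finally show ?thesis .
  qed
  with C show ?thesis by blast
qed

lemma coef_sum: "coef (sum f A) n = (\<Sum>i\<in>A. coef (f i) n)"
  by (induction A rule: infinite_finite_induct) simp_all

definition trunc :: "nat \<Rightarrow> 'a::comm_complex_banach_algebra_1 ds \<Rightarrow> 'a ds" where
  "trunc N a = Abs_ds (\<lambda>n. if n < N then coef a n else 0)"

lemma coef_trunc: "coef (trunc N a) n = (if n < N then coef a n else 0)"
  unfolding trunc_def by (subst coef_Abs) auto

lemma trunc_eq_sum: "trunc N a = (\<Sum>m<N. mono_el (coef a m) m)"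
proof (rule ds_eqI)
  fix n :: nat assume n: "n > 0"
  have "coef (\<Sum>m<N. mono_el (coef a m) m) n = (\<Sum>m<N. if n = m then coef a n else 0)"
    unfolding coef_sum by (rule sum.cong) (use n in \<open>auto simp: coef_mono_el\<close>)
  also have "\<dots> = coef (trunc N a) n" by (simp add: coef_trunc)
  finally show "coef (trunc N a) n = coef (\<Sum>m<N. mono_el (coef a m) m) n" ..
qed

lemma wL_trunc: "wL w (trunc N a)"
proof -
  have "wL w (\<Sum>m<N. mono_el (coef a m) m)"
    unfolding wL_def coef_sum
    by (rule summable_finite[of "{..<N}"]) (auto simp: coef_mono_el)
  thus ?thesis by (simp add: trunc_eq_sum)
qed

lemma sum_mono_bound:
  assumes adm: "admissible_weight w"
  shows "\<exists>C\<ge>1. \<forall>j. wsum w ((\<Sum>m<N. mono_el (c m) m)^j) \<le> C * (\<Sum>m<N. 2 * norm (c m))^j"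
proof (induction N)
  case 0
  have wt: "is_weight w" using adm by (simp add: admissible_weight_def)
  have "wsum w ((\<Sum>m<0. mono_el (c m) m)^j) \<le> 1 * (\<Sum>m<0. 2 * norm (c m))^j" for j
    by (cases j) (simp_all add: wsum_one[OF wt] wsum_zero)
  thus ?case by (intro exI[of _ 1]) auto
next
  case (Suc N)
  have wt: "is_weight w" using adm by (simp add: admissible_weight_def)
  obtain C1 where C1: "C1 \<ge> 1" "\<And>j. wsum w ((\<Sum>m<N. mono_el (c m) m)^j) \<le> C1 * (\<Sum>m<N. 2 * norm (c m))^j"
    using Suc by blast
  obtain C2 where C2: "C2 \<ge> 1" "\<And>j. wsum w ((mono_el (c N) N)^j) \<le> C2 * (2 * norm (c N))^j"
    using mono_pow_bound[OF adm] by blast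
  have x: "wL w (\<Sum>m<N. mono_el (c m) m)"
    using wL_sum[of "{..<N}" w "\<lambda>m. mono_el (c m) m"] wt wL_mono_el by blast
  have "wsum w (((\<Sum>m<N. mono_el (c m) m) + mono_el (c N) N)^j)
      \<le> C1 * C2 * ((\<Sum>m<N. 2 * norm (c m)) + 2 * norm (c N))^j" for j
    by (rule binom_bound[OF wt x wL_mono_el]) (use C1 C2 in \<open>auto intro: sum_nonneg\<close>)
  moreover have "C1 * C2 \<ge> 1" using C1 C2 by (metis mult_mono' mult_1 zero_le_one)
  ultimately show ?case by (intro exI[of _ "C1 * C2"]) simp
qed

lemma full_bound:
  assumes adm: "admissible_weight w" and R: "wL w R"
  shows "\<exists>C\<ge>1. \<forall>j. wsum w (R^j) \<le> C * ((\<Sum>m<N. 2 * norm (coef R m)) + wsum w (R - trunc N R))^j"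
proof -
  have wt: "is_weight w" using adm by (simp add: admissible_weight_def)
  obtain C where C: "C \<ge> 1" "\<And>j. wsum w ((\<Sum>m<N. mono_el (coef R m) m)^j) \<le> C * (\<Sum>m<N. 2 * norm (coef R m))^j"
    using sum_mono_bound[OF adm] by blast
  have x: "wL w (\<Sum>m<N. mono_el (coef R m) m)"
    using wL_sum[of "{..<N}" w "\<lambda>m. mono_el (coef R m) m"] wt wL_mono_el by blast
  have T: "wL w (R - trunc N R)" using wL_diff[OF R wL_trunc wt] by blast
  have "wsum w (((\<Sum>m<N. mono_el (coef R m) m) + (R - trunc N R))^j)
      \<le> C * 1 * ((\<Sum>m<N. 2 * norm (coef R m)) + wsum w (R - trunc N R))^j" for j
    by (rule binom_bound[OF wt x T]) (use C wL_pow[OF T wt] wsum_nonneg[OF wt T] in \<open>auto intro: sum_nonneg\<close>)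
  moreover have "(\<Sum>m<N. mono_el (coef R m) m) + (R - trunc N R) = R" by (simp add: trunc_eq_sum)
  ultimately show ?thesis using C(1) by (intro exI[of _ C]) simp
qed

lemma tail_small:
  assumes wt: "is_weight w" and a: "wL w a" and e: "\<epsilon> > 0"
  shows "\<exists>N. wsum w (a - trunc N a) < \<epsilon>"
proof -
  define f where "f n = norm (coef a n) * w n" for n
  have sf: "summable f" using a by (simp add: wL_def f_def[abs_def])
  obtain N where N: "\<And>n. n \<ge> N \<Longrightarrow> norm (\<Sum>i. f (i + n)) < \<epsilon>"
    using suminf_exist_split[OF e sf] by blast
  define g where "g n = (if n < N then 0 else f n)" for n
  have g: "(\<lambda>n. norm (coef (a - trunc N a) n) * w n) = g"
    by (auto simp: g_def f_def coef_trunc)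
  have "wL w (a - trunc N a)" using wL_diff[OF a wL_trunc wt] by blast
  hence sg: "summable g" unfolding wL_def g .
  have "suminf g = (\<Sum>i. g (i + N)) + sum g {..<N}"
    by (rule suminf_split_initial_segment[OF sg])
  also have "\<dots> = (\<Sum>i. f (i + N))" by (simp add: g_def)
  finally have "wsum w (a - trunc N a) = (\<Sum>i. f (i + N))" unfolding wsum_def g .
  moreover have "(\<Sum>i. f (i + N)) < \<epsilon>" using N[of N] by simp
  ultimately have "wsum w (a - trunc N a) < \<epsilon>" by simp
  thus ?thesis by blast
qed

lemma wL_weaken: "is_weight w \<Longrightarrow> wL w a \<Longrightarrow> wL (\<lambda>_. 1) a \<and> wsum (\<lambda>_. 1) a \<le> wsum w a"
proof -
  assume wt: "is_weight w" and a: "wL w a"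
  have le: "norm (coef a n) * 1 \<le> norm (coef a n) * w n" for n
  proof (cases "n = 0")
    case False
    thus ?thesis using wt_ge1[OF wt, of n] by (intro mult_left_mono) auto
  qed simp
  have s: "wL (\<lambda>_. 1) a" unfolding wL_def
    by (rule summable_cmp[of _ "\<lambda>n. norm (coef a n) * w n"]) (use le a in \<open>auto simp: wL_def\<close>)
  moreover have "wsum (\<lambda>_. 1) a \<le> wsum w a" unfolding wsum_def
    by (rule suminf_le) (use le a s in \<open>auto simp: wL_def\<close>)
  ultimately show ?thesis by blast
qed

lemma trunc_part_le: "wL (\<lambda>_. 1) a \<Longrightarrow> (\<Sum>m<N. norm (coef a m)) \<le> wsum (\<lambda>_. 1) a"
  unfolding wsum_def wL_def by (simp add: sum_le_suminf)

lemma neumann: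
  fixes R :: "'a::comm_complex_banach_algebra_1 ds"
  assumes wt: "is_weight w" and R: "wL w R" and q: "0 \<le> q" "q < 1"
    and bnd: "\<And>j. wsum w (R^j) \<le> C * q^j"
  shows "\<exists>S. wL w S \<and> (1 - R) * S = 1"
proof -
  have Rj: "wL w (R^j)" for j using wL_pow[OF R wt] by blast
  have geo: "summable (\<lambda>j. C * q^j)"
    by (rule summable_mult) (use q in \<open>simp add: summable_geometric\<close>)
  have cb: "norm (coef (R^j) n) \<le> C * q^j" for j n
  proof (cases "n = 0")
    case True
    have "0 \<le> wsum w (R^j)" by (rule wsum_nonneg[OF wt Rj])
    thus ?thesis using True bnd[of j] by simp
  next
    case False
    have "norm (coef (R^j) n) * 1 \<le> norm (coef (R^j) n) * w n"
      using wt_ge1[OF wt, of n] False by (intro mult_left_mono) auto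
    also have "\<dots> \<le> wsum w (R^j)" by (rule coef_le_wsum[OF wt Rj])
    also have "\<dots> \<le> C * q^j" by (rule bnd)
    finally show ?thesis by simp
  qed
  have sn: "summable (\<lambda>j. norm (coef (R^j) n))" for n
    by (rule summable_cmp[OF _ _ geo]) (use cb in auto)
  have sc: "summable (\<lambda>j. coef (R^j) n)" for n
    by (rule summable_norm_cancel[OF sn])
  define S where "S = Abs_ds (\<lambda>n. \<Sum>j. coef (R^j) n)"
  have cS: "coef S n = (\<Sum>j. coef (R^j) n)" for n
    unfolding S_def by (subst coef_Abs) auto
  have wn0: "0 \<le> w n" if "n > 0" for n using wt_ge1[OF wt that] by simp
  have "wL w S" unfolding wL_def
  proof (rule bounded_imp_summable)
    show "0 \<le> norm (coef S n) * w n" for n by (rule term_nonneg[OF wt])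
    fix M
    have "(\<Sum>n\<le>M. norm (coef S n) * w n) \<le> (\<Sum>n\<le>M. \<Sum>j. norm (coef (R^j) n) * w n)"
    proof (rule sum_mono)
      fix n
      show "norm (coef S n) * w n \<le> (\<Sum>j. norm (coef (R^j) n) * w n)"
      proof (cases "n = 0")
        case True thus ?thesis by (simp add: cS)
      next
        case False
        have "norm (coef S n) * w n \<le> (\<Sum>j. norm (coef (R^j) n)) * w n"
          unfolding cS by (rule mult_right_mono[OF summable_norm[OF sn] wn0]) (use False in auto)
        also have "\<dots> = (\<Sum>j. norm (coef (R^j) n) * w n)" by (rule suminf_mult2[OF sn])
        finally show ?thesis .
      qed
    qed
    also have "\<dots> = (\<Sum>j. \<Sum>n\<le>M. norm (coef (R^j) n) * w n)"
      by (rule suminf_sum[symmetric]) (rule summable_mult2[OF sn])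
    also have "\<dots> \<le> (\<Sum>j. C * q^j)"
    proof (rule suminf_le)
      show le: "(\<Sum>n\<le>M. norm (coef (R^j) n) * w n) \<le> C * q^j" for j
      proof -
        have "(\<Sum>n\<le>M. norm (coef (R^j) n) * w n) \<le> wsum w (R^j)"
          unfolding wsum_def using Rj[of j]
          by (intro sum_le_suminf) (auto simp: wL_def term_nonneg[OF wt])
        also have "\<dots> \<le> C * q^j" by (rule bnd)
        finally show ?thesis .
      qed
      show "summable (\<lambda>j. \<Sum>n\<le>M. norm (coef (R^j) n) * w n)"
        by (rule summable_cmp[OF _ le geo]) (auto intro: sum_nonneg term_nonneg[OF wt])
      show "summable (\<lambda>j. C * q^j)" by (rule geo)
    qed
    finally show "(\<Sum>n\<le>M. norm (coef S n) * w n) \<le> (\<Sum>j. C * q^j)" .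
  qed
  moreover have "(1 - R) * S = 1"
  proof (rule ds_eqI)
    fix n :: nat assume n: "n > 0"
    have "coef (R * S) n = (\<Sum>z\<in>P n. \<Sum>j. coef R (fst z) * coef (R^j) (snd z))"
      unfolding coef_mult cS by (rule sum.cong) (auto simp: suminf_mult[OF sc])
    also have "\<dots> = (\<Sum>j. \<Sum>z\<in>P n. coef R (fst z) * coef (R^j) (snd z))"
      by (rule suminf_sum[symmetric]) (rule summable_mult[OF sc])
    also have "\<dots> = (\<Sum>j. coef (R^Suc j) n)"
      by (simp add: coef_mult case_prod_beta)
    also have "\<dots> = coef S n - coef (R^0) n"
      unfolding cS by (rule suminf_split_head[OF sc])
    finally have "coef (R * S) n = coef S n - coef 1 n" by simp
    moreover have "(1 - R) * S = S - R * S" by (simp add: algebra_simps)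
    ultimately show "coef ((1 - R) * S) n = coef 1 n" by simp
  qed
  ultimately show ?thesis by blast
qed

lemma cscale_zero[simp]: "cscale c (0::'a::comm_complex_banach_algebra_1) = 0"
proof -
  have "cscale c (0::'a) = cscale c 0 + cscale c 0" by (metis add_0 cscale_add_right)
  thus ?thesis by simp
qed

lemma cscale_sum: "cscale c (sum f A) = (\<Sum>i\<in>A. cscale c (f i :: 'a::comm_complex_banach_algebra_1))"
  by (induction A rule: infinite_finite_induct) (simp_all add: cscale_add_right)

lemma cscale_diff: "cscale c (x - y) = cscale c x - cscale c (y :: 'a::comm_complex_banach_algebra_1)"
  by (metis add_diff_cancel diff_add_cancel cscale_add_right)

lemma cscale_mult_mult: "cscale u x * cscale v y = cscale (u * v) (x * (y :: 'a::comm_complex_banach_algebra_1))"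
proof -
  have "cscale u x * cscale v y = cscale u (x * cscale v y)" by (rule cscale_mult_left)
  also have "x * cscale v y = cscale v (y * x)" by (metis cscale_mult_left mult.commute)
  also have "cscale u (cscale v (y * x)) = cscale (u * v) (x * y)" by (simp add: cscale_cscale mult.commute)
  finally show ?thesis .
qed

lemma cscale_of_real: "cscale (of_real r) x = scaleR r (x :: 'a::comm_complex_banach_algebra_1)"
  by (simp add: scaleR_cscale)

definition ser :: "'a::comm_complex_banach_algebra_1 ds \<Rightarrow> complex \<Rightarrow> 'a" where
  "ser a s = (\<Sum>n. cscale (of_nat n powr (- s)) (coef a n))"

lemma norm_npowr: "s \<in> half_plane \<Longrightarrow> n > 0 \<Longrightarrow> cmod (of_nat n powr (- s)) \<le> 1"
proof -
  assume s: "s \<in> half_plane" and n: "n > 0"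
  have "cmod (of_nat n powr (- s)) = real n powr (- Re s)"
    by (subst norm_powr_real_powr) auto
  also have "\<dots> = inverse (real n powr Re s)" by (simp add: powr_minus)
  also have "\<dots> \<le> 1"
    using ge_one_powr_ge_zero[of "real n" "Re s"] n s by (auto simp: half_plane_def inverse_le_1_iff)
  finally show ?thesis .
qed

lemma norm_term: "s \<in> half_plane \<Longrightarrow> norm (cscale (of_nat n powr (- s)) (coef a n)) \<le> norm (coef a n)"
proof (cases "n = 0")
  case False
  assume s: "s \<in> half_plane"
  have "norm (cscale (of_nat n powr (- s)) (coef a n)) = cmod (of_nat n powr (- s)) * norm (coef a n)"
    by (rule norm_cscale)
  also have "\<dots> \<le> 1 * norm (coef a n)"
    by (rule mult_right_mono[OF norm_npowr[OF s]]) (use False in auto)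
  finally show ?thesis by simp
qed simp

lemma summable_term:
  assumes "wL (\<lambda>_. 1) a" "s \<in> half_plane"
  shows "summable (\<lambda>n. norm (cscale (of_nat n powr (- s)) (coef a n)))"
  by (rule summable_cmp[of _ "\<lambda>n. norm (coef a n)"]) (use assms norm_term in \<open>auto simp: wL_def\<close>)

lemma ser_mult:
  assumes a: "wL (\<lambda>_. 1) a" and b: "wL (\<lambda>_. 1) b" and s: "s \<in> half_plane"
  shows "ser a s * ser b s = ser (a * b) s"
proof -
  define x where "x n = cscale (of_nat n powr (- s)) (coef a n)" for n
  define y where "y n = cscale (of_nat n powr (- s)) (coef b n)" for n
  have sx: "summable (\<lambda>n. norm (x n))" "summable (\<lambda>n. norm (y n))"
    unfolding x_def y_def using summable_term[OF a s] summable_term[OF b s] by auto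
  have "((\<lambda>(d,e). x d * y e) has_sum (suminf x * suminf y)) UNIV"
    by (rule has_sum_prod[OF sx])
  hence hs: "((\<lambda>n. sum (\<lambda>(d,e). x d * y e) (P n)) has_sum (suminf x * suminf y)) UNIV"
    by (rule fiber_has_sum) (simp_all add: x_def y_def)
  have fib: "sum (\<lambda>(d,e). x d * y e) (P n) = cscale (of_nat n powr (- s)) (coef (a*b) n)" for n
  proof (cases "n = 0")
    case True thus ?thesis using P_infinite by simp
  next
    case False
    hence n: "n > 0" by simp
    have "sum (\<lambda>(d,e). x d * y e) (P n) = (\<Sum>(d,e)\<in>P n. cscale (of_nat n powr (- s)) (coef a d * coef b e))"
    proof (rule sum.cong)
      fix z assume z: "z \<in> P n"
      obtain d e where de: "z = (d,e)" by (cases z)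
      have dn: "d * e = n" using z de by (simp add: P_def)
      have "(of_nat n :: complex) powr (- s) = (of_nat d * of_nat e) powr (- s)" using dn by (metis of_nat_mult)
      also have "\<dots> = of_nat d powr (- s) * of_nat e powr (- s)"
        by (rule powr_times_real) auto
      finally show "(case z of (d,e) \<Rightarrow> x d * y e) = (case z of (d,e) \<Rightarrow> cscale (of_nat n powr (- s)) (coef a d * coef b e))"
        by (simp add: de x_def y_def cscale_mult_mult)
    qed simp
    also have "\<dots> = cscale (of_nat n powr (- s)) (coef (a*b) n)"
      by (simp add: coef_mult cscale_sum case_prod_beta)
    finally show ?thesis .
  qed
  have "(\<lambda>n. cscale (of_nat n powr (- s)) (coef (a*b) n)) sums (suminf x * suminf y)"
    using has_sum_imp_sums[OF hs] unfolding fib .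
  moreover have "suminf x = ser a s" "suminf y = ser b s"
    by (simp_all add: x_def[abs_def] y_def[abs_def] ser_def)
  ultimately show ?thesis unfolding ser_def by (simp add: sums_iff)
qed

lemma ser_diff:
  assumes a: "wL (\<lambda>_. 1) a" and b: "wL (\<lambda>_. 1) b" and s: "s \<in> half_plane"
  shows "ser (a - b) s = ser a s - ser b s"
  unfolding ser_def coef_diff cscale_diff
  by (rule suminf_diff[symmetric]; rule summable_norm_cancel, rule summable_term) (use assms in auto)

lemma ser_one: "ser 1 s = 1"
proof -
  have "(\<lambda>n. cscale (of_nat n powr (- s)) (coef (1::'a::comm_complex_banach_algebra_1 ds) n))
      = (\<lambda>n. if n = 1 then 1 else 0)"
    by (auto simp: coef_one cscale_one)
  thus ?thesis unfolding ser_def using sums_single[of 1 "\<lambda>_. 1::'a"] by (simp add: sums_iff)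
qed

lemma ser_unique:
  fixes a :: "'a::comm_complex_banach_algebra_1 ds"
  assumes a: "wL (\<lambda>_. 1) a" and z: "\<forall>s\<in>half_plane. ser a s = 0"
  shows "a = 0"
proof (rule ccontr)
  assume "a \<noteq> 0"
  hence ex: "\<exists>n. coef a n \<noteq> 0" using ds_eqI[of a 0] by auto
  define n0 where "n0 = (LEAST n. coef a n \<noteq> 0)"
  have an0: "coef a n0 \<noteq> 0" unfolding n0_def by (rule LeastI_ex[OF ex])
  have below: "coef a n = 0" if "n < n0" for n
    using not_less_Least[OF that[unfolded n0_def]] by simp
  have n0: "n0 > 0" using an0 by (cases n0) auto
  define W where "W = (\<Sum>n. norm (coef a n))"
  have sW: "summable (\<lambda>n. norm (coef a n))" using a by (simp add: wL_def)
  define \<rho> where "\<rho> = real n0 / (real n0 + 1)"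
  have \<rho>: "0 \<le> \<rho>" "\<rho> < 1" using n0 by (auto simp: \<rho>_def)
  have bound: "norm (coef a n0) \<le> \<rho>^k * W" for k
  proof -
    define s where "s = (of_nat k :: complex)"
    have s: "s \<in> half_plane" by (simp add: s_def half_plane_def)
    define u where "u n = inverse (real n ^ k) *\<^sub>R coef a n" for n
    have tu: "cscale (of_nat n powr (- s)) (coef a n) = u n" for n
    proof (cases "n = 0")
      case False
      have e: "(of_nat n :: complex) powr (- s) = of_real (inverse (real n ^ k))"
        using False by (simp add: s_def powr_minus)
      show ?thesis unfolding e cscale_of_real u_def ..
    qed (simp add: u_def)
    have su: "summable (\<lambda>n. norm (u n))" using summable_term[OF a s] unfolding tu .
    have "ser a s = 0" using z s by blast
    hence u0: "suminf u = 0" unfolding ser_def tu by simp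
    define v where "v n = (real n0 ^ k) *\<^sub>R u n" for n
    have sv: "summable v" unfolding v_def
      by (rule summable_scaleR_right[OF summable_norm_cancel[OF su]])
    have v0: "suminf v = 0"
      unfolding v_def using suminf_scaleR_right[OF summable_norm_cancel[OF su], of "real n0 ^ k"] u0 by simp
    have vn0: "v n0 = coef a n0" using n0 by (simp add: v_def u_def)
    define wk where "wk n = (if n = n0 then 0 else v n)" for n
    have wkb: "norm (wk n) \<le> \<rho>^k * norm (coef a n)" for n
    proof -
      consider "n < n0" | "n = n0" | "n > n0" by linarith
      thus ?thesis
      proof cases
        case 1 thus ?thesis by (simp add: wk_def v_def u_def below)
      next
        case 2 thus ?thesis using \<rho> by (simp add: wk_def)
      next
        case 3
        have "norm (wk n) = (real n0 / real n)^k * norm (coef a n)"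
          using 3 by (simp add: wk_def v_def u_def power_divide divide_inverse[symmetric])
        also have "\<dots> \<le> \<rho>^k * norm (coef a n)"
        proof (intro mult_right_mono power_mono)
          show "real n0 / real n \<le> \<rho>" unfolding \<rho>_def using 3
            by (intro divide_left_mono) auto
        qed auto
        finally show ?thesis .
      qed
    qed
    have swk: "summable (\<lambda>n. norm (wk n))"
      by (rule summable_cmp[OF _ wkb summable_mult[OF sW]]) auto
    have "v = (\<lambda>n. (if n = n0 then coef a n0 else 0) + wk n)"
      by (auto simp: wk_def vn0)
    hence "suminf v = (\<Sum>n. if n = n0 then coef a n0 else 0) + suminf wk"
      using suminf_add[OF summable_single summable_norm_cancel[OF swk]] by simp
    also have "(\<Sum>n. if n = n0 then coef a n0 else 0) = coef a n0"
      using sums_single[of n0 "\<lambda>_. coef a n0"] by (simp add: sums_iff)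
    finally have "coef a n0 = - suminf wk" using v0 by (simp add: eq_neg_iff_add_eq_0 add.commute)
    hence "norm (coef a n0) = norm (suminf wk)" by simp
    also have "\<dots> \<le> (\<Sum>n. norm (wk n))" by (rule summable_norm[OF swk])
    also have "\<dots> \<le> (\<Sum>n. \<rho>^k * norm (coef a n))"
      by (rule suminf_le[OF wkb swk summable_mult[OF sW]])
    also have "\<dots> = \<rho>^k * W" unfolding W_def by (rule suminf_mult[OF sW])
    finally show ?thesis .
  qed
  have "(\<lambda>k. \<rho>^k * W) \<longlonglongrightarrow> 0 * W"
    by (intro tendsto_mult_right LIMSEQ_power_zero) (use \<rho> in simp)
  hence "norm (coef a n0) \<le> 0"
    using bound by (intro LIMSEQ_le_const[of "\<lambda>k. \<rho>^k * W"]) auto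
  thus False using an0 by simp
qed

theorem mainTheorem4:
  fixes \<omega> :: "nat \<Rightarrow> real"
    and f g :: "complex \<Rightarrow> 'a::comm_complex_banach_algebra_1"
  assumes "admissible_weight \<omega>"
    and "f \<in> dirichlet_alg \<omega>"
    and "g \<in> dirichlet_alg1"
    and "\<forall>s\<in>half_plane. f s * g s = 1"
  shows "g \<in> dirichlet_alg \<omega>"
proof -
  have adm: "admissible_weight \<omega>" by fact
  have wt: "is_weight \<omega>" using adm by (simp add: admissible_weight_def)
  have wt1: "is_weight (\<lambda>_. 1)" by (rule is_weight_one)
  obtain cf where cf0: "cf 0 = 0" and sf: "summable (\<lambda>n. norm (cf n) * \<omega> n)"
    and feq: "\<forall>s\<in>half_plane. f s = (\<Sum>n. cscale (of_nat n powr (- s)) (cf n))"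
    using assms(2) unfolding dirichlet_alg_def by blast
  obtain cg where cg0: "cg 0 = 0" and sg: "summable (\<lambda>n. norm (cg n) * 1)"
    and geq: "\<forall>s\<in>half_plane. g s = (\<Sum>n. cscale (of_nat n powr (- s)) (cg n))"
    using assms(3) unfolding dirichlet_alg1_def dirichlet_alg_def by blast
  define F :: "'a ds" where "F = Abs_ds cf"
  define G :: "'a ds" where "G = Abs_ds cg"
  have cF: "coef F = cf" unfolding F_def using cf0 by simp
  have cG: "coef G = cg" unfolding G_def using cg0 by simp
  have Fw: "wL \<omega> F" using sf by (simp add: wL_def cF)
  have F1: "wL (\<lambda>_. 1) F" using wL_weaken[OF wt Fw] by blast
  have G1: "wL (\<lambda>_. 1) G" using sg by (simp add: wL_def cG)
  have fser: "f s = ser F s" if "s \<in> half_plane" for s using feq that by (simp add: ser_def cF)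
  have gser: "g s = ser G s" if "s \<in> half_plane" for s using geq that by (simp add: ser_def cG)
  have FG1: "wL (\<lambda>_. 1) (F * G)" using wL_mult[OF F1 G1 wt1] by blast
  have "F * G - 1 = 0"
  proof (rule ser_unique)
    show "wL (\<lambda>_. 1) (F * G - 1)" using wL_diff[OF FG1 wL_one wt1] by blast
    show "\<forall>s\<in>half_plane. ser (F * G - 1) s = 0"
    proof
      fix s assume s: "s \<in> half_plane"
      have "ser (F * G - 1) s = ser (F * G) s - ser 1 s" by (rule ser_diff[OF FG1 wL_one s])
      also have "\<dots> = f s * g s - 1"
        using ser_mult[OF F1 G1 s] fser[OF s] gser[OF s] ser_one by simp
      also have "\<dots> = 0" using assms(4) s by simp
      finally show "ser (F * G - 1) s = 0" .
    qed
  qed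
  hence FG: "F * G = 1" by simp
  define K where "K = wsum (\<lambda>_. 1) F"
  have K0: "K \<ge> 0" unfolding K_def by (rule wsum_nonneg[OF wt1 F1])
  obtain N1 where N1: "wsum (\<lambda>_. 1) (G - trunc N1 G) < 1 / (4 * (K + 1))"
    using tail_small[OF wt1 G1, of "1 / (4 * (K + 1))"] K0 by auto
  define P where "P = trunc N1 G"
  have Pw: "wL \<omega> P" unfolding P_def by (rule wL_trunc)
  have GP1: "wL (\<lambda>_. 1) (G - P)" unfolding P_def using wL_diff[OF G1 wL_trunc wt1] by blast
  define R where "R = 1 - F * P"
  have FPw: "wL \<omega> (F * P)" using wL_mult[OF Fw Pw wt] by blast
  have Rw: "wL \<omega> R" unfolding R_def using wL_diff[OF wL_one FPw wt] by blast
  have R1: "wL (\<lambda>_. 1) R" using wL_weaken[OF wt Rw] by blast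
  have "R = F * (G - P)" unfolding R_def using FG by (simp add: algebra_simps)
  hence "wsum (\<lambda>_. 1) R \<le> K * wsum (\<lambda>_. 1) (G - P)"
    unfolding K_def using wL_mult[OF F1 GP1 wt1] by simp
  also have "\<dots> \<le> K * (1 / (4 * (K + 1)))"
    using N1 K0 unfolding P_def by (intro mult_left_mono) auto
  also have "\<dots> < 1/4" using K0 by (simp add: field_simps)
  finally have Rsmall: "wsum (\<lambda>_. 1) R < 1/4" .
  obtain N where N: "wsum \<omega> (R - trunc N R) < 1/4"
    using tail_small[OF wt Rw, of "1/4"] by auto
  obtain C where C: "C \<ge> 1"
    "\<And>j. wsum \<omega> (R^j) \<le> C * ((\<Sum>m<N. 2 * norm (coef R m)) + wsum \<omega> (R - trunc N R))^j"
    using full_bound[OF adm Rw, of N] by blast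
  define q where "q = (\<Sum>m<N. 2 * norm (coef R m)) + wsum \<omega> (R - trunc N R)"
  have T: "wL \<omega> (R - trunc N R)" using wL_diff[OF Rw wL_trunc wt] by blast
  have "0 \<le> (\<Sum>m<N. 2 * norm (coef R m))" by (rule sum_nonneg) simp
  hence q0: "q \<ge> 0" unfolding q_def using wsum_nonneg[OF wt T] by linarith
  have "(\<Sum>m<N. 2 * norm (coef R m)) = 2 * (\<Sum>m<N. norm (coef R m))" by (simp add: sum_distrib_left)
  also have "\<dots> \<le> 2 * wsum (\<lambda>_. 1) R" using trunc_part_le[OF R1, of N] by simp
  finally have "q < 1" unfolding q_def using Rsmall N by linarith
  obtain S where S: "wL \<omega> S" "(1 - R) * S = 1"
    using neumann[OF wt Rw q0 \<open>q < 1\<close>, of C] C(2) unfolding q_def by blast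
  have "F * (P * S) = 1" using S(2) unfolding R_def by (simp add: mult.assoc)
  hence "G = P * S"
    by (metis FG mult.assoc mult.commute mult_1_right)
  hence Gw: "wL \<omega> G" using wL_mult[OF Pw S(1) wt] by simp
  show ?thesis unfolding dirichlet_alg_def
    using cg0 Gw geq by (auto simp: wL_def cG)
qed

end
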